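(* Let $\varepsilon\in(0,1)$ and let $T\in\mathcal B(\ell^2(\mathbb N^d))$ be symmetric. If $\langle\Lambda(Q)\rangle^{\varepsilon}T\in\mathcal B(\ell^2(\mathbb N^d))$, then $T\in\mathcal C^{0,1}(A_{\mathbb N^d})$.
   Context: $\mathbb N=\{0,1,2,\dots\}$. $\Lambda(n)=\sum_j\langle n_j\rangle$, $\langle x\rangle=(1+x^2)^{1/2}$, and $\langle\Lambda(Q)\rangle$ is multiplication by $(1+\Lambda(n)^2)^{1/2}$. $A_{\mathbb N^d}=\sum_jA_{j,+}$, $A_{j,+}=-\frac{\mathrm i\,\mathrm{sign}(r_j)}2(U_{j,+}(Q_j+\frac12)-(Q_j+\frac12)U_{j,+}^* )$ for fixed $\vec r$ with nonzero components, $U_{j,+}$ the unilateral shift ($(U_{j,+}f)(n)=f(n-e_j)$ if $n_j\ge1$, $0$ otherwise), $(Q_jf)(n)=n_jf(n)$, closure from finitely supported functions. $T\in\mathcal C^{0,1}(A)$ iff $\int_0^1\|e^{\mathrm isA}Te^{-\mathrm isA}-T\|ds/s<\infty$. *)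

theory Defs
  imports "HOL-Analysis.Analysis"
begin

text \<open>Elements of l2(N^d) are functions on multi-indices n :: 'd => nat, where
  'd is a finite index type with CARD('d) = d.\<close>

definition l2 :: "(('d::finite \<Rightarrow> nat) \<Rightarrow> complex) set" where
  "l2 = {f. (\<lambda>n. (cmod (f n))\<^sup>2) summable_on UNIV}"

definition l2norm :: "(('d::finite \<Rightarrow> nat) \<Rightarrow> complex) \<Rightarrow> real" where
  "l2norm f = sqrt (infsum (\<lambda>n. (cmod (f n))\<^sup>2) UNIV)"

definition l2inner :: "(('d::finite \<Rightarrow> nat) \<Rightarrow> complex) \<Rightarrow> (('d \<Rightarrow> nat) \<Rightarrow> complex) \<Rightarrow> complex" where
  "l2inner f g = infsum (\<lambda>n. cnj (f n) * g n) UNIV"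

text \<open>Bounded linear operator on l2 (only its action on l2 matters).\<close>
definition bounded_op :: "((('d::finite \<Rightarrow> nat) \<Rightarrow> complex) \<Rightarrow> (('d \<Rightarrow> nat) \<Rightarrow> complex)) \<Rightarrow> bool" where
  "bounded_op T \<longleftrightarrow>
     (\<forall>f\<in>l2. T f \<in> l2) \<and>
     (\<forall>f\<in>l2. \<forall>g\<in>l2. \<forall>a b. T (\<lambda>n. a * f n + b * g n) = (\<lambda>n. a * T f n + b * T g n)) \<and>
     (\<exists>C. \<forall>f\<in>l2. l2norm (T f) \<le> C * l2norm f)"

definition opnorm :: "((('d::finite \<Rightarrow> nat) \<Rightarrow> complex) \<Rightarrow> (('d \<Rightarrow> nat) \<Rightarrow> complex)) \<Rightarrow> real" where
  "opnorm T = Sup {l2norm (T f) | f. f \<in> l2 \<and> l2norm f \<le> 1}"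

definition symmetric_op :: "((('d::finite \<Rightarrow> nat) \<Rightarrow> complex) \<Rightarrow> (('d \<Rightarrow> nat) \<Rightarrow> complex)) \<Rightarrow> bool" where
  "symmetric_op T \<longleftrightarrow> (\<forall>f\<in>l2. \<forall>g\<in>l2. l2inner (T f) g = l2inner f (T g))"

definition japan :: "real \<Rightarrow> real" where
  "japan x = sqrt (1 + x\<^sup>2)"

definition Lam :: "('d::finite \<Rightarrow> nat) \<Rightarrow> real" where
  "Lam n = (\<Sum>j\<in>UNIV. japan (real (n j)))"

definition Ushift :: "'d \<Rightarrow> (('d::finite \<Rightarrow> nat) \<Rightarrow> complex) \<Rightarrow> (('d \<Rightarrow> nat) \<Rightarrow> complex)" where
  "Ushift j g = (\<lambda>n. if 1 \<le> n j then g (n(j := n j - 1)) else 0)"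

definition Ustar :: "'d \<Rightarrow> (('d::finite \<Rightarrow> nat) \<Rightarrow> complex) \<Rightarrow> (('d \<Rightarrow> nat) \<Rightarrow> complex)" where
  "Ustar j g = (\<lambda>n. g (n(j := n j + 1)))"

definition Qhalf :: "'d \<Rightarrow> (('d::finite \<Rightarrow> nat) \<Rightarrow> complex) \<Rightarrow> (('d \<Rightarrow> nat) \<Rightarrow> complex)" where
  "Qhalf j g = (\<lambda>n. (of_nat (n j) + 1/2) * g n)"

definition Ajplus :: "('d \<Rightarrow> real) \<Rightarrow> 'd \<Rightarrow> (('d::finite \<Rightarrow> nat) \<Rightarrow> complex) \<Rightarrow> (('d \<Rightarrow> nat) \<Rightarrow> complex)" where
  "Ajplus r j g = (\<lambda>n. - (\<i> * of_real (sgn (r j)) / 2) *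
       (Ushift j (Qhalf j g) n - Qhalf j (Ustar j g) n))"

text \<open>A_0 = sum_j A_{j,+}, to be applied to finitely supported functions.\<close>
definition A0 :: "('d \<Rightarrow> real) \<Rightarrow> (('d::finite \<Rightarrow> nat) \<Rightarrow> complex) \<Rightarrow> (('d \<Rightarrow> nat) \<Rightarrow> complex)" where
  "A0 r g = (\<lambda>n. \<Sum>j\<in>UNIV. Ajplus r j g n)"

text \<open>Graph of the closure A_{N^d} of A_0 (defined on finitely supported functions).\<close>
definition A_graph :: "('d \<Rightarrow> real) \<Rightarrow> ((('d::finite \<Rightarrow> nat) \<Rightarrow> complex) \<times> (('d \<Rightarrow> nat) \<Rightarrow> complex)) set" where
  "A_graph r = {(f, g). f \<in> l2 \<and> g \<in> l2 \<and>
     (\<exists>\<phi>. (\<forall>k. finite {n. \<phi> k n \<noteq> 0}) \<and>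
          (\<lambda>k. l2norm (\<lambda>n. \<phi> k n - f n)) \<longlonglongrightarrow> 0 \<and>
          (\<lambda>k. l2norm (\<lambda>n. A0 r (\<phi> k) n - g n)) \<longlonglongrightarrow> 0)}"

definition unitary_group :: "(real \<Rightarrow> (('d::finite \<Rightarrow> nat) \<Rightarrow> complex) \<Rightarrow> (('d \<Rightarrow> nat) \<Rightarrow> complex)) \<Rightarrow> bool" where
  "unitary_group W \<longleftrightarrow>
     (\<forall>s. bounded_op (W s) \<and> (\<forall>f\<in>l2. l2norm (W s f) = l2norm f) \<and> W s ` l2 = l2) \<and>
     (\<forall>f\<in>l2. W 0 f = f) \<and>
     (\<forall>s t. \<forall>f\<in>l2. W (s + t) f = W s (W t f)) \<and>
     (\<forall>f\<in>l2. \<forall>t. ((\<lambda>s. l2norm (\<lambda>n. W s f n - W t f n)) \<longlongrightarrow> 0) (at t))"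

text \<open>W s = e^{isA}: W is a unitary group whose generator (-i d/ds W(s) at s = 0)
  is exactly the closure of A_0.\<close>
definition generated_by :: "(real \<Rightarrow> (('d::finite \<Rightarrow> nat) \<Rightarrow> complex) \<Rightarrow> (('d \<Rightarrow> nat) \<Rightarrow> complex)) \<Rightarrow> ('d \<Rightarrow> real) \<Rightarrow> bool" where
  "generated_by W r \<longleftrightarrow> unitary_group W \<and>
     (\<forall>f\<in>l2. \<forall>g\<in>l2. (f, g) \<in> A_graph r \<longleftrightarrow>
        ((\<lambda>s. l2norm (\<lambda>n. (W s f n - f n) / (\<i> * of_real s) - g n)) \<longlongrightarrow> 0) (at 0))"

definition C01 :: "(real \<Rightarrow> (('d::finite \<Rightarrow> nat) \<Rightarrow> complex) \<Rightarrow> (('d \<Rightarrow> nat) \<Rightarrow> complex)) \<Rightarrow> ((('d \<Rightarrow> nat) \<Rightarrow> complex) \<Rightarrow> (('d \<Rightarrow> nat) \<Rightarrow> complex)) \<Rightarrow> bool" where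
  "C01 W T \<longleftrightarrow>
     (\<integral>\<^sup>+ s\<in>{0<..1}. ennreal (opnorm (\<lambda>f n. W s (T (W (- s) f)) n - T f n) / s) \<partial>lborel) < \<infinity>"

end

theory Submission
  imports Defs
begin

lemma L2_set_cmod_le_l2norm:
  assumes "f \<in> l2" "finite F"
  shows "L2_set (\<lambda>n. cmod (f n)) F \<le> l2norm f"
proof -
  have "(\<Sum>n\<in>F. (cmod (f n))\<^sup>2) \<le> infsum (\<lambda>n. (cmod (f n))\<^sup>2) UNIV"
    using assms by (intro finite_sum_le_infsum) (auto simp: l2_def)
  then show ?thesis unfolding L2_set_def l2norm_def by simp
qed

lemma l2I_L2_set:
  assumes "\<And>F. finite F \<Longrightarrow> L2_set (\<lambda>n. cmod (h n)) F \<le> c"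
  shows "h \<in> l2 \<and> l2norm h \<le> c"
proof -
  have c0: "0 \<le> c" using assms[of "{}"] by simp
  have fs: "(\<Sum>n\<in>F. (cmod (h n))\<^sup>2) \<le> c\<^sup>2" if "finite F" for F
  proof -
    have "sqrt (\<Sum>n\<in>F. (cmod (h n))\<^sup>2) \<le> c" using assms[OF that] by (simp add: L2_set_def)
    then show ?thesis using c0 by (simp add: real_sqrt_le_iff sqrt_le_D)
  qed
  have sm: "(\<lambda>n. (cmod (h n))\<^sup>2) summable_on UNIV"
    apply (rule nonneg_bdd_above_summable_on)
     apply simp
    using fs by (auto simp: bdd_above_def)
  have "infsum (\<lambda>n. (cmod (h n))\<^sup>2) UNIV \<le> c\<^sup>2"
    by (rule infsum_le_finite_sums[OF sm]) (use fs in auto)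
  then show ?thesis using sm c0 by (auto simp: l2_def l2norm_def real_sqrt_le_iff intro: real_le_lsqrt)
qed

lemma l2norm_nonneg: "0 \<le> l2norm f"
  unfolding l2norm_def by (simp add: infsum_nonneg)

lemma l2_dom:
  assumes "f \<in> l2" "0 \<le> c" "\<And>n. cmod (h n) \<le> c * cmod (f n)"
  shows "h \<in> l2 \<and> l2norm h \<le> c * l2norm f"
proof (rule l2I_L2_set)
  fix F :: "('a \<Rightarrow> nat) set" assume F: "finite F"
  have "L2_set (\<lambda>n. cmod (h n)) F \<le> L2_set (\<lambda>n. c * cmod (f n)) F"
    by (rule L2_set_mono) (use assms in auto)
  also have "\<dots> = c * L2_set (\<lambda>n. cmod (f n)) F"
    using assms(2) by (simp add: L2_set_right_distrib)
  also have "\<dots> \<le> c * l2norm f"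
    using L2_set_cmod_le_l2norm[OF assms(1) F] assms(2) by (simp add: mult_left_mono)
  finally show "L2_set (\<lambda>n. cmod (h n)) F \<le> c * l2norm f" .
qed

lemma l2_add_bound:
  assumes "f \<in> l2" "g \<in> l2" "\<And>n. cmod (h n) \<le> cmod (f n) + cmod (g n)"
  shows "h \<in> l2 \<and> l2norm h \<le> l2norm f + l2norm g"
proof (rule l2I_L2_set)
  fix F :: "('a \<Rightarrow> nat) set" assume F: "finite F"
  have "L2_set (\<lambda>n. cmod (h n)) F \<le> L2_set (\<lambda>n. cmod (f n) + cmod (g n)) F"
    by (rule L2_set_mono) (use assms in auto)
  also have "\<dots> \<le> L2_set (\<lambda>n. cmod (f n)) F + L2_set (\<lambda>n. cmod (g n)) F"
    by (rule L2_set_triangle_ineq)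
  also have "\<dots> \<le> l2norm f + l2norm g"
    using L2_set_cmod_le_l2norm[OF assms(1) F] L2_set_cmod_le_l2norm[OF assms(2) F] by simp
  finally show "L2_set (\<lambda>n. cmod (h n)) F \<le> l2norm f + l2norm g" .
qed

lemma l2_sum_bound:
  assumes "finite J" "\<And>j. j \<in> J \<Longrightarrow> f j \<in> l2"
    "\<And>n. cmod (h n) \<le> (\<Sum>j\<in>J. cmod (f j n))"
  shows "h \<in> l2 \<and> l2norm h \<le> (\<Sum>j\<in>J. l2norm (f j))"
proof -
  have "(\<lambda>n. complex_of_real (\<Sum>j\<in>J. cmod (f j n))) \<in> l2 \<and>
        l2norm (\<lambda>n. complex_of_real (\<Sum>j\<in>J. cmod (f j n))) \<le> (\<Sum>j\<in>J. l2norm (f j))"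
    using assms(1,2)
  proof (induction J rule: finite_induct)
    case empty
    then show ?case using l2I_L2_set[of "\<lambda>n. 0" 0] by (simp add: L2_set_def)
  next
    case (insert j J)
    have IH: "(\<lambda>n. complex_of_real (\<Sum>j\<in>J. cmod (f j n))) \<in> l2 \<and>
        l2norm (\<lambda>n. complex_of_real (\<Sum>j\<in>J. cmod (f j n))) \<le> (\<Sum>j\<in>J. l2norm (f j))"
      using insert by auto
    have "(\<lambda>n. complex_of_real (\<Sum>j\<in>insert j J. cmod (f j n))) \<in> l2 \<and>
      l2norm (\<lambda>n. complex_of_real (\<Sum>j\<in>insert j J. cmod (f j n))) \<le>
        l2norm (f j) + l2norm (\<lambda>n. complex_of_real (\<Sum>j\<in>J. cmod (f j n)))"
      apply (rule l2_add_bound)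
      using insert IH apply auto[2]
    proof -
      fix n
      have S: "0 \<le> (\<Sum>j\<in>J. cmod (f j n))" by (simp add: sum_nonneg)
      have "(\<Sum>j\<in>insert j J. cmod (f j n)) = cmod (f j n) + (\<Sum>j\<in>J. cmod (f j n))"
        using insert by simp
      then show "cmod (complex_of_real (\<Sum>j\<in>insert j J. cmod (f j n)))
           \<le> cmod (f j n) + cmod (complex_of_real (\<Sum>j\<in>J. cmod (f j n)))"
        using S by (simp only: norm_of_real) simp
    qed
    then show ?case using IH insert by auto
  qed
  moreover have "cmod (h n) \<le> 1 * cmod (complex_of_real (\<Sum>j\<in>J. cmod (f j n)))" for n
  proof -
    have "0 \<le> (\<Sum>j\<in>J. cmod (f j n))" by (simp add: sum_nonneg)
    then show ?thesis using assms(3)[of n] by (simp only: norm_of_real)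
  qed
  ultimately show ?thesis
    using l2_dom[of "\<lambda>n. complex_of_real (\<Sum>j\<in>J. cmod (f j n))" 1 h]
    by auto
qed

lemma l2_lin:
  assumes "f \<in> l2" "g \<in> l2"
  shows "(\<lambda>n. a * f n + b * g n) \<in> l2"
proof -
  have "(\<lambda>n. a * f n) \<in> l2" using l2_dom[OF assms(1), of "cmod a"] by (auto simp: norm_mult)
  moreover have "(\<lambda>n. b * g n) \<in> l2" using l2_dom[OF assms(2), of "cmod b"] by (auto simp: norm_mult)
  moreover have "\<And>n. cmod (a * f n + b * g n) \<le> cmod (a * f n) + cmod (b * g n)"
    by (rule norm_triangle_ineq)
  ultimately show ?thesis using l2_add_bound[of "\<lambda>n. a * f n" "\<lambda>n. b * g n" "\<lambda>n. a * f n + b * g n"] by blast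
qed

lemma l2norm_cmult: "l2norm (\<lambda>n. c * f n) = cmod c * l2norm f"
proof -
  have "infsum (\<lambda>n. (cmod (c * f n))\<^sup>2) UNIV = (cmod c)\<^sup>2 * infsum (\<lambda>n. (cmod (f n))\<^sup>2) UNIV"
    by (simp add: norm_mult power_mult_distrib infsum_cmult_right')
  then show ?thesis by (simp add: l2norm_def real_sqrt_mult)
qed

lemma l2norm_minus_commute: "l2norm (\<lambda>n. f n - g n) = l2norm (\<lambda>n. g n - f n)"
  unfolding l2norm_def by (simp add: norm_minus_commute)

lemma l2norm_zero: "l2norm (\<lambda>n. 0) = 0"
  unfolding l2norm_def by simp

lemma l2_zero: "(\<lambda>n. 0) \<in> l2"
  unfolding l2_def by simp

lemma l2_diff: "f \<in> l2 \<Longrightarrow> g \<in> l2 \<Longrightarrow> (\<lambda>n. f n - g n) \<in> l2"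
  using l2_lin[of f g 1 "-1"] by simp

lemma l2_add: "f \<in> l2 \<Longrightarrow> g \<in> l2 \<Longrightarrow> (\<lambda>n. f n + g n) \<in> l2"
  using l2_lin[of f g 1 1] by simp

lemma l2norm_triangle: "f \<in> l2 \<Longrightarrow> g \<in> l2 \<Longrightarrow> l2norm (\<lambda>n. f n + g n) \<le> l2norm f + l2norm g"
  using l2_add_bound[of f g "\<lambda>n. f n + g n"] norm_triangle_ineq by blast

lemma l2norm_triangle_diff: "f \<in> l2 \<Longrightarrow> g \<in> l2 \<Longrightarrow> l2norm (\<lambda>n. f n - g n) \<le> l2norm f + l2norm g"
  using l2_add_bound[of f g "\<lambda>n. f n - g n"] norm_triangle_ineq4 by blast

lemma l2_inner_summable:
  assumes "a \<in> l2" "b \<in> l2"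
  shows "(\<lambda>n. norm (cnj (a n) * b n)) summable_on UNIV"
    and "infsum (\<lambda>n. cmod (cnj (a n) * b n)) UNIV \<le> l2norm a * l2norm b"
proof -
  have fs: "(\<Sum>n\<in>F. cmod (cnj (a n) * b n)) \<le> l2norm a * l2norm b" if "finite F" for F
  proof -
    have "(\<Sum>n\<in>F. cmod (cnj (a n) * b n)) = (\<Sum>n\<in>F. \<bar>cmod (a n)\<bar> * \<bar>cmod (b n)\<bar>)"
      by (simp add: norm_mult)
    also have "\<dots> \<le> L2_set (\<lambda>n. cmod (a n)) F * L2_set (\<lambda>n. cmod (b n)) F"
      by (rule L2_set_mult_ineq)
    also have "\<dots> \<le> l2norm a * l2norm b"
      using L2_set_cmod_le_l2norm[OF assms(1) that] L2_set_cmod_le_l2norm[OF assms(2) that]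
      by (intro mult_mono) (auto simp: l2norm_nonneg)
    finally show ?thesis .
  qed
  show sm: "(\<lambda>n. norm (cnj (a n) * b n)) summable_on UNIV"
    apply (rule nonneg_bdd_above_summable_on)
     apply simp
    using fs by (auto simp: bdd_above_def)
  show "infsum (\<lambda>n. cmod (cnj (a n) * b n)) UNIV \<le> l2norm a * l2norm b"
    by (rule infsum_le_finite_sums[OF sm]) (use fs in auto)
qed

lemma l2_re_inner_le:
  assumes "a \<in> l2" "b \<in> l2"
  shows "Re (l2inner a b) \<le> l2norm a * l2norm b"
proof -
  have "Re (l2inner a b) \<le> cmod (l2inner a b)" by (rule complex_Re_le_cmod)
  also have "\<dots> \<le> infsum (\<lambda>n. cmod (cnj (a n) * b n)) UNIV"
    unfolding l2inner_def by (rule norm_infsum_bound[OF l2_inner_summable(1)[OF assms]])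
  also have "\<dots> \<le> l2norm a * l2norm b" by (rule l2_inner_summable(2)[OF assms])
  finally show ?thesis .
qed

lemma l2_inner_summable':
  assumes "a \<in> l2" "b \<in> l2"
  shows "(\<lambda>n. cnj (a n) * b n) summable_on UNIV"
  by (rule abs_summable_summable[OF l2_inner_summable(1)[OF assms]])

lemma l2_sq_summable: "a \<in> l2 \<Longrightarrow> (\<lambda>n. (cmod (a n))\<^sup>2) summable_on UNIV"
  unfolding l2_def by simp

lemma l2norm_sq: "a \<in> l2 \<Longrightarrow> (l2norm a)\<^sup>2 = infsum (\<lambda>n. (cmod (a n))\<^sup>2) UNIV"
  unfolding l2norm_def by (simp add: infsum_nonneg)

lemma l2_re_inner_self:
  assumes "a \<in> l2"
  shows "Re (l2inner a a) = (l2norm a)\<^sup>2"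
proof -
  have "Re (l2inner a a) = infsum (\<lambda>n. Re (cnj (a n) * a n)) UNIV"
    unfolding l2inner_def by (rule infsum_Re[symmetric, OF l2_inner_summable'[OF assms assms]])
  also have "\<dots> = infsum (\<lambda>n. (cmod (a n))\<^sup>2) UNIV"
    by (rule infsum_cong) (unfold cmod_power2, simp add: power2_eq_square)
  finally show ?thesis using l2norm_sq[OF assms] by simp
qed

lemma l2_re_inner_diff:
  assumes "a \<in> l2" "b \<in> l2" "c \<in> l2"
  shows "Re (l2inner a (\<lambda>n. b n - c n)) = Re (l2inner a b) - Re (l2inner a c)"
proof -
  have "l2inner a (\<lambda>n. b n - c n) = infsum (\<lambda>n. cnj (a n) * b n + (- (cnj (a n) * c n))) UNIV"
    unfolding l2inner_def by (rule infsum_cong) (simp add: algebra_simps)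
  also have "\<dots> = l2inner a b + infsum (\<lambda>n. - (cnj (a n) * c n)) UNIV"
    unfolding l2inner_def
    by (rule infsum_add[OF l2_inner_summable'[OF assms(1,2)] summable_on_uminus[THEN iffD2, OF l2_inner_summable'[OF assms(1,3)]]])
  also have "\<dots> = l2inner a b - l2inner a c"
    unfolding l2inner_def by (simp add: infsum_uminus)
  finally show ?thesis by simp
qed

lemma l2_polar:
  assumes "a \<in> l2" "b \<in> l2"
  shows "Re (l2inner a b) = ((l2norm (\<lambda>n. a n + b n))\<^sup>2 - (l2norm (\<lambda>n. a n - b n))\<^sup>2) / 4"
proof -
  have s1: "(\<lambda>n. (cmod (a n + b n))\<^sup>2) summable_on UNIV" using l2_add[OF assms] by (rule l2_sq_summable)
  have s2: "(\<lambda>n. (cmod (a n - b n))\<^sup>2) summable_on UNIV" using l2_diff[OF assms] by (rule l2_sq_summable)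
  have "Re (l2inner a b) = infsum (\<lambda>n. Re (cnj (a n) * b n)) UNIV"
    unfolding l2inner_def by (rule infsum_Re[symmetric, OF l2_inner_summable'[OF assms]])
  also have "\<dots> = infsum (\<lambda>n. ((cmod (a n + b n))\<^sup>2 + (- (cmod (a n - b n))\<^sup>2)) / 4) UNIV"
  proof (rule infsum_cong)
    fix n
    show "Re (cnj (a n) * b n) = ((cmod (a n + b n))\<^sup>2 + (- (cmod (a n - b n))\<^sup>2)) / 4"
      unfolding cmod_power2 by (simp add: power2_eq_square algebra_simps)
  qed
  also have "\<dots> = infsum (\<lambda>n. (cmod (a n + b n))\<^sup>2 + (- (cmod (a n - b n))\<^sup>2)) UNIV / 4"
    using infsum_cmult_left'[of "\<lambda>n. (cmod (a n + b n))\<^sup>2 + (- (cmod (a n - b n))\<^sup>2)" "1/4" UNIV]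
    by simp
  also have "infsum (\<lambda>n. (cmod (a n + b n))\<^sup>2 + (- (cmod (a n - b n))\<^sup>2)) UNIV
      = infsum (\<lambda>n. (cmod (a n + b n))\<^sup>2) UNIV + infsum (\<lambda>n. - (cmod (a n - b n))\<^sup>2) UNIV"
    by (rule infsum_add[OF s1 summable_on_uminus[THEN iffD2, OF s2]])
  also have "\<dots> = (l2norm (\<lambda>n. a n + b n))\<^sup>2 - (l2norm (\<lambda>n. a n - b n))\<^sup>2"
    using l2norm_sq[OF l2_add[OF assms]] l2norm_sq[OF l2_diff[OF assms]] by (simp add: infsum_uminus)
  finally show ?thesis .
qed

context
  fixes W :: "real \<Rightarrow> (('d::finite \<Rightarrow> nat) \<Rightarrow> complex) \<Rightarrow> (('d \<Rightarrow> nat) \<Rightarrow> complex)"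
  assumes UG: "unitary_group W"
begin

lemma W_l2: "f \<in> l2 \<Longrightarrow> W s f \<in> l2"
  using UG unfolding unitary_group_def bounded_op_def by blast

lemma W_iso: "f \<in> l2 \<Longrightarrow> l2norm (W s f) = l2norm f"
  using UG unfolding unitary_group_def by blast

lemma W_lin: "f \<in> l2 \<Longrightarrow> g \<in> l2 \<Longrightarrow> W s (\<lambda>n. a * f n + b * g n) = (\<lambda>n. a * W s f n + b * W s g n)"
  using UG unfolding unitary_group_def bounded_op_def by blast

lemma W_0: "f \<in> l2 \<Longrightarrow> W 0 f = f"
  using UG unfolding unitary_group_def by blast

lemma W_add_group: "f \<in> l2 \<Longrightarrow> W (s + t) f = W s (W t f)"
  using UG unfolding unitary_group_def by blast

lemma W_diff: "f \<in> l2 \<Longrightarrow> g \<in> l2 \<Longrightarrow> W s (\<lambda>n. f n - g n) = (\<lambda>n. W s f n - W s g n)"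
  using W_lin[of f g s 1 "-1"] by simp

lemma W_plus: "f \<in> l2 \<Longrightarrow> g \<in> l2 \<Longrightarrow> W s (\<lambda>n. f n + g n) = (\<lambda>n. W s f n + W s g n)"
  using W_lin[of f g s 1 1] by simp

lemma W_inv: "f \<in> l2 \<Longrightarrow> W s (W (- s) f) = f"
  using W_add_group[of f s "-s"] W_0[of f] by simp

lemma psi_sub:
  assumes g: "g \<in> l2"
  shows "l2norm (\<lambda>n. W (s + t) g n - g n) \<le> l2norm (\<lambda>n. W s g n - g n) + l2norm (\<lambda>n. W t g n - g n)"
proof -
  have e: "(\<lambda>n. W (s + t) g n - g n) = (\<lambda>n. (W s (W t g) n - W s g n) + (W s g n - g n))"
    using W_add_group[OF g] by simp
  have "W s (\<lambda>n. W t g n - g n) = (\<lambda>n. W s (W t g) n - W s g n)"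
    by (rule W_diff[OF W_l2[OF g] g])
  then have n1: "l2norm (\<lambda>n. W s (W t g) n - W s g n) = l2norm (\<lambda>n. W t g n - g n)"
    using W_iso[OF l2_diff[OF W_l2[OF g, where s=t] g], where s=s] by simp
  have "l2norm (\<lambda>n. (W s (W t g) n - W s g n) + (W s g n - g n))
        \<le> l2norm (\<lambda>n. W s (W t g) n - W s g n) + l2norm (\<lambda>n. W s g n - g n)"
    by (rule l2norm_triangle) (intro l2_diff W_l2 g)+
  then show ?thesis using e n1 by simp
qed

lemma psi_mult:
  assumes g: "g \<in> l2"
  shows "l2norm (\<lambda>n. W (real k * t) g n - g n) \<le> real k * l2norm (\<lambda>n. W t g n - g n)"
proof (induction k)
  case 0
  then show ?case using W_0[OF g] by (simp add: l2norm_zero)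
next
  case (Suc k)
  have "l2norm (\<lambda>n. W (real k * t + t) g n - g n)
     \<le> l2norm (\<lambda>n. W (real k * t) g n - g n) + l2norm (\<lambda>n. W t g n - g n)"
    by (rule psi_sub[OF g])
  then show ?case using Suc by (simp add: algebra_simps)
qed

lemma psi_neg:
  assumes g: "g \<in> l2"
  shows "l2norm (\<lambda>n. W (- s) g n - g n) = l2norm (\<lambda>n. W s g n - g n)"
proof -
  have "W s (\<lambda>n. W (- s) g n - g n) = (\<lambda>n. g n - W s g n)"
    using W_diff[OF W_l2[OF g] g, of s] W_inv[OF g] by simp
  then have "l2norm (\<lambda>n. W (- s) g n - g n) = l2norm (\<lambda>n. g n - W s g n)"
    using W_iso[OF l2_diff[OF W_l2[OF g, where s="-s"] g], where s=s] by simp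
  then show ?thesis by (simp add: l2norm_minus_commute)
qed

end

lemma psi_bound:
  assumes GB: "generated_by W r" and g: "g \<in> l2" and Ag: "A0 r g \<in> l2"
    and gr: "(g, A0 r g) \<in> A_graph r"
  shows "l2norm (\<lambda>n. W s g n - g n) \<le> \<bar>s\<bar> * l2norm (A0 r g)"
proof -
  have UG: "unitary_group W" using GB unfolding generated_by_def by blast
  define E where "E t = l2norm (\<lambda>n. (W t g n - g n) / (\<i> * of_real t) - A0 r g n)" for t
  have Elim: "(E \<longlongrightarrow> 0) (at 0)"
    using GB g Ag gr unfolding generated_by_def E_def by blast
  have pos: "l2norm (\<lambda>n. W s g n - g n) \<le> s * l2norm (A0 r g)" if "s > 0" for s
  proof -
    have bnd: "l2norm (\<lambda>n. W t g n - g n) \<le> t * (l2norm (A0 r g) + E t)" if "t > 0" for t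
    proof -
      have l2q: "(\<lambda>n. (W t g n - g n) / (\<i> * of_real t)) \<in> l2"
        using l2_lin[OF l2_diff[OF W_l2[OF UG g, where s=t] g] g, where a="1 / (\<i> * of_real t)" and b=0] by simp
      have "(\<lambda>n. W t g n - g n) = (\<lambda>n. (\<i> * of_real t) * ((W t g n - g n) / (\<i> * of_real t)))"
        using that by auto
      then have "l2norm (\<lambda>n. W t g n - g n) = cmod (\<i> * of_real t) * l2norm (\<lambda>n. (W t g n - g n) / (\<i> * of_real t))"
        by (simp only: l2norm_cmult)
      then have "l2norm (\<lambda>n. W t g n - g n) = t * l2norm (\<lambda>n. (W t g n - g n) / (\<i> * of_real t))"
        using that by (simp add: norm_mult)
      also have "l2norm (\<lambda>n. (W t g n - g n) / (\<i> * of_real t)) \<le> l2norm (A0 r g) + E t"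
      proof -
        have "l2norm (\<lambda>n. A0 r g n + ((W t g n - g n) / (\<i> * of_real t) - A0 r g n))
            \<le> l2norm (A0 r g) + E t"
          unfolding E_def by (rule l2norm_triangle[OF Ag l2_diff[OF l2q Ag]])
        then show ?thesis by simp
      qed
      finally show ?thesis using that by (simp add: mult_left_mono)
    qed
    have fl: "filterlim (\<lambda>k. s / real k) (at 0) sequentially"
    proof (rule filterlim_atI)
      show "((\<lambda>k. s / real k) \<longlongrightarrow> 0) sequentially" by (rule lim_const_over_n)
      show "\<forall>\<^sub>F k in sequentially. s / real k \<noteq> 0"
        using that eventually_gt_at_top[of "0::nat"] by (auto elim: eventually_mono)
    qed
    have El: "((\<lambda>k. E (s / real k)) \<longlongrightarrow> 0) sequentially"
      using filterlim_compose[OF Elim fl] by simp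
    have lim: "((\<lambda>k. s * (l2norm (A0 r g) + E (s / real k))) \<longlongrightarrow> s * (l2norm (A0 r g) + 0)) sequentially"
      by (intro tendsto_intros El)
    have ev: "\<forall>\<^sub>F k in sequentially. l2norm (\<lambda>n. W s g n - g n) \<le> s * (l2norm (A0 r g) + E (s / real k))"
      using eventually_gt_at_top[of "0::nat"]
    proof (rule eventually_mono)
      fix k :: nat assume k: "0 < k"
      have "l2norm (\<lambda>n. W (real k * (s / real k)) g n - g n) \<le> real k * l2norm (\<lambda>n. W (s / real k) g n - g n)"
        by (rule psi_mult[OF UG g])
      also have "\<dots> \<le> real k * ((s / real k) * (l2norm (A0 r g) + E (s / real k)))"
        using bnd[of "s / real k"] k that by (intro mult_left_mono) auto
      finally show "l2norm (\<lambda>n. W s g n - g n) \<le> s * (l2norm (A0 r g) + E (s / real k))"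
        using k by simp
    qed
    show ?thesis
      using tendsto_le[OF trivial_limit_sequentially lim tendsto_const ev] by simp
  qed
  show ?thesis
  proof (cases "s = 0")
    case True then show ?thesis using W_0[OF UG g] by (simp add: l2norm_zero)
  next
    case False
    show ?thesis
    proof (cases "s > 0")
      case True then show ?thesis using pos by simp
    next
      case False
      then have "- s > 0" using \<open>s \<noteq> 0\<close> by simp
      then show ?thesis using pos[of "-s"] psi_neg[OF UG g, of "-s"] by simp
    qed
  qed
qed

lemma japan_ge_abs: "\<bar>x\<bar> \<le> japan x"
  unfolding japan_def by (rule real_le_rsqrt) simp

lemma japan_ge_1: "1 \<le> japan x"
  unfolding japan_def by simp

lemma japan_nonneg: "0 \<le> japan x"
  using japan_ge_1[of x] by simp

lemma Lam_ge: "japan (real (m j)) \<le> Lam m"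
  unfolding Lam_def by (rule member_le_sum) (auto simp: japan_nonneg)

lemma Lam_nonneg: "0 \<le> Lam m"
  unfolding Lam_def by (simp add: sum_nonneg japan_nonneg)

lemma Lam_coord: "real (m j) + 1 \<le> 2 * Lam m"
  using Lam_ge[of m j] japan_ge_abs[of "real (m j)"] japan_ge_1[of "real (m j)"] by simp

lemma cmod_nat_half: "cmod (of_nat k + 1/2 :: complex) = real k + 1/2"
proof -
  have "(of_nat k + 1/2 :: complex) = complex_of_real (real k + 1/2)" by simp
  then show ?thesis by (simp only: norm_of_real)
qed

lemma cmod_of_real_sum2: "cmod (complex_of_real (cmod a + cmod b)) = cmod a + cmod b"
proof -
  have "cmod (complex_of_real (cmod a + cmod b)) = \<bar>cmod a + cmod b\<bar>" by (rule norm_of_real)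
  then show ?thesis by simp
qed

lemma Ushift_l2:
  assumes h: "h \<in> l2"
  shows "Ushift j h \<in> l2 \<and> l2norm (Ushift j h) \<le> l2norm h"
proof (rule l2I_L2_set)
  fix F :: "('a \<Rightarrow> nat) set" assume F: "finite F"
  define D where "D n = n(j := n j - 1)" for n :: "'a \<Rightarrow> nat"
  define S where "S = {n :: 'a \<Rightarrow> nat. 1 \<le> n j}"
  have inj: "inj_on D (F \<inter> S)"
  proof (rule inj_onI)
    fix x y assume xy: "x \<in> F \<inter> S" "y \<in> F \<inter> S" "D x = D y"
    show "x = y"
    proof
      fix k
      have "D x k = D y k" using xy by simp
      then show "x k = y k" using xy unfolding D_def S_def by (cases "k = j") auto
    qed
  qed
  have "(\<Sum>n\<in>F. (cmod (Ushift j h n))\<^sup>2) = (\<Sum>n\<in>F \<inter> S. (cmod (h (D n)))\<^sup>2)"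
    by (rule sum.mono_neutral_cong_right) (use F in \<open>auto simp: Ushift_def S_def D_def\<close>)
  also have "\<dots> = (\<Sum>m\<in>D ` (F \<inter> S). (cmod (h m))\<^sup>2)"
    using sum.reindex[OF inj, of "\<lambda>m. (cmod (h m))\<^sup>2"] by simp
  finally have "L2_set (\<lambda>n. cmod (Ushift j h n)) F = L2_set (\<lambda>n. cmod (h n)) (D ` (F \<inter> S))"
    unfolding L2_set_def by simp
  also have "\<dots> \<le> l2norm h" using F by (intro L2_set_cmod_le_l2norm h) auto
  finally show "L2_set (\<lambda>n. cmod (Ushift j h n)) F \<le> l2norm h" .
qed

lemma Ustar_l2:
  assumes h: "h \<in> l2"
  shows "Ustar j h \<in> l2 \<and> l2norm (Ustar j h) \<le> l2norm h"
proof (rule l2I_L2_set)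
  fix F :: "('a \<Rightarrow> nat) set" assume F: "finite F"
  define D where "D n = n(j := n j + 1)" for n :: "'a \<Rightarrow> nat"
  have inj: "inj_on D F"
  proof (rule inj_onI)
    fix x y assume xy: "x \<in> F" "y \<in> F" "D x = D y"
    show "x = y"
    proof
      fix k
      have "D x k = D y k" using xy by simp
      then show "x k = y k" unfolding D_def by (cases "k = j") auto
    qed
  qed
  have "(\<Sum>n\<in>F. (cmod (Ustar j h n))\<^sup>2) = (\<Sum>m\<in>D ` F. (cmod (h m))\<^sup>2)"
    using sum.reindex[OF inj, of "\<lambda>m. (cmod (h m))\<^sup>2"] by (simp add: Ustar_def D_def)
  then have "L2_set (\<lambda>n. cmod (Ustar j h n)) F = L2_set (\<lambda>n. cmod (h n)) (D ` F)"
    unfolding L2_set_def by simp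
  also have "\<dots> \<le> l2norm h" using F by (intro L2_set_cmod_le_l2norm h) auto
  finally show "L2_set (\<lambda>n. cmod (Ustar j h n)) F \<le> l2norm h" .
qed

lemma Ajplus_pw:
  fixes g :: "('d::finite \<Rightarrow> nat) \<Rightarrow> complex"
  defines "L \<equiv> (\<lambda>m. complex_of_real (Lam m) * g m)"
  shows "cmod (Ajplus r j g n) \<le> cmod (Ushift j L n) + cmod (Ustar j L n)"
proof -
  have X: "cmod (Ushift j (Qhalf j g) n) \<le> 2 * cmod (Ushift j L n)"
  proof (cases "1 \<le> n j")
    case True
    define m where "m = n(j := n j - 1)"
    have "Ushift j (Qhalf j g) n = (of_nat (m j) + 1/2) * g m"
      using True unfolding Ushift_def Qhalf_def m_def by simp
    then have "cmod (Ushift j (Qhalf j g) n) = (real (m j) + 1/2) * cmod (g m)"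
      by (simp only: norm_mult cmod_nat_half)
    also have "\<dots> \<le> (2 * Lam m) * cmod (g m)"
      using Lam_coord[of m j] by (intro mult_right_mono) auto
    also have "\<dots> = 2 * cmod (Ushift j L n)"
      using True Lam_nonneg[of m] by (simp add: Ushift_def L_def m_def norm_mult)
    finally show ?thesis .
  next
    case False then show ?thesis by (simp add: Ushift_def)
  qed
  have Y: "cmod (Qhalf j (Ustar j g) n) \<le> 2 * cmod (Ustar j L n)"
  proof -
    define m where "m = n(j := n j + 1)"
    have "cmod (Qhalf j (Ustar j g) n) = (real (n j) + 1/2) * cmod (g m)"
      by (simp add: Ustar_def Qhalf_def m_def norm_mult cmod_nat_half)
    also have "\<dots> \<le> (2 * Lam m) * cmod (g m)"
      using Lam_coord[of m j] by (intro mult_right_mono) (auto simp: m_def)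
    also have "\<dots> = 2 * cmod (Ustar j L n)"
      using Lam_nonneg[of m] by (simp add: Ustar_def L_def m_def norm_mult)
    finally show ?thesis .
  qed
  have c: "cmod (- (\<i> * complex_of_real (sgn (r j)) / 2)) \<le> 1/2"
  proof -
    have "\<bar>sgn (r j)\<bar> \<le> 1" by (cases "r j" "0::real" rule: linorder_cases) auto
    then show ?thesis by (simp add: norm_mult norm_divide)
  qed
  have "cmod (Ajplus r j g n) = cmod (- (\<i> * complex_of_real (sgn (r j)) / 2))
        * cmod (Ushift j (Qhalf j g) n - Qhalf j (Ustar j g) n)"
    unfolding Ajplus_def by (rule norm_mult)
  also have "\<dots> \<le> 1/2 * (cmod (Ushift j (Qhalf j g) n) + cmod (Qhalf j (Ustar j g) n))"
    using c by (intro mult_mono norm_triangle_ineq4) auto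
  also have "\<dots> \<le> cmod (Ushift j L n) + cmod (Ustar j L n)"
    using X Y by simp
  finally show ?thesis .
qed

lemma A0_bound:
  fixes g :: "('d::finite \<Rightarrow> nat) \<Rightarrow> complex"
  assumes L: "(\<lambda>m. complex_of_real (Lam m) * g m) \<in> l2"
  shows "A0 r g \<in> l2 \<and> l2norm (A0 r g) \<le> 2 * real CARD('d) * l2norm (\<lambda>m. complex_of_real (Lam m) * g m)"
proof -
  define L where "L = (\<lambda>m. complex_of_real (Lam m) * g m)"
  define F where "F j = (\<lambda>n. complex_of_real (cmod (Ushift j L n) + cmod (Ustar j L n)))" for j
  have Fj: "F j \<in> l2 \<and> l2norm (F j) \<le> 2 * l2norm L" for j
  proof -
    have "F j \<in> l2 \<and> l2norm (F j) \<le> l2norm (Ushift j L) + l2norm (Ustar j L)"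
      by (rule l2_add_bound) (use Ushift_l2[OF L[folded L_def]] Ustar_l2[OF L[folded L_def]] in \<open>auto simp only: F_def cmod_of_real_sum2\<close>)
    then show ?thesis
      using Ushift_l2[OF L[folded L_def], of j] Ustar_l2[OF L[folded L_def], of j] by auto
  qed
  have pw: "cmod (A0 r g n) \<le> (\<Sum>j\<in>UNIV. cmod (F j n))" for n
  proof -
    have "cmod (A0 r g n) \<le> (\<Sum>j\<in>UNIV. cmod (Ajplus r j g n))"
      unfolding A0_def by (rule norm_sum)
    also have "\<dots> \<le> (\<Sum>j\<in>UNIV. cmod (F j n))"
    proof (rule sum_mono)
      fix j
      have "cmod (F j n) = cmod (Ushift j L n) + cmod (Ustar j L n)"
        unfolding F_def by (rule cmod_of_real_sum2)
      then show "cmod (Ajplus r j g n) \<le> cmod (F j n)"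
        using Ajplus_pw[of r j g n] unfolding L_def by simp
    qed
    finally show ?thesis .
  qed
  have "A0 r g \<in> l2 \<and> l2norm (A0 r g) \<le> (\<Sum>j\<in>UNIV. l2norm (F j))"
    by (rule l2_sum_bound) (use Fj pw in auto)
  moreover have "(\<Sum>j\<in>(UNIV::'d set). l2norm (F j)) \<le> (\<Sum>j\<in>(UNIV::'d set). 2 * l2norm L)"
    by (rule sum_mono) (use Fj in auto)
  ultimately show ?thesis unfolding L_def by simp
qed

lemma finite_low_set:
  fixes c :: real
  shows "finite {n :: ('d::finite \<Rightarrow> nat). japan (Lam n) \<le> c}"
proof -
  define M where "M = nat \<lceil>c\<rceil>"
  have "{n :: ('d \<Rightarrow> nat). japan (Lam n) \<le> c} \<subseteq> Pi\<^sub>E UNIV (\<lambda>_. {..M})"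
  proof
    fix n :: "'d \<Rightarrow> nat" assume "n \<in> {n. japan (Lam n) \<le> c}"
    then have n: "japan (Lam n) \<le> c" by simp
    have "n j \<le> M" for j
    proof -
      have "real (n j) \<le> japan (real (n j))" using japan_ge_abs[of "real (n j)"] by simp
      also have "\<dots> \<le> Lam n" by (rule Lam_ge)
      also have "\<dots> \<le> japan (Lam n)" using japan_ge_abs[of "Lam n"] by simp
      also have "\<dots> \<le> c" by (rule n)
      finally have "real (n j) \<le> c" .
      then show ?thesis unfolding M_def by linarith
    qed
    then show "n \<in> Pi\<^sub>E UNIV (\<lambda>_. {..M})" by (simp add: PiE_UNIV_domain)
  qed
  moreover have "finite (Pi\<^sub>E (UNIV :: 'd set) (\<lambda>_. {..M}))" by (rule finite_PiE) auto
  ultimately show ?thesis by (rule finite_subset)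
qed

lemma graph_finite_support:
  assumes "g \<in> l2" "A0 r g \<in> l2" "finite {n. g n \<noteq> 0}"
  shows "(g, A0 r g) \<in> A_graph r"
  unfolding A_graph_def using assms by (auto intro!: exI[of _ "\<lambda>k. g"] simp: l2norm_zero)

lemma main_est:
  fixes u :: "('d::finite \<Rightarrow> nat) \<Rightarrow> complex"
  assumes GB: "generated_by W r" and u: "u \<in> l2"
    and v: "(\<lambda>n. complex_of_real (japan (Lam n) powr \<epsilon>) * u n) \<in> l2"
    and e: "0 < \<epsilon>" "\<epsilon> < 1" and s: "s \<noteq> 0"
  shows "l2norm (\<lambda>n. W s u n - u n) \<le> (2 + 2 * real CARD('d)) * \<bar>s\<bar> powr \<epsilon> *
           l2norm (\<lambda>n. complex_of_real (japan (Lam n) powr \<epsilon>) * u n)"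
proof -
  have UG: "unitary_group W" using GB unfolding generated_by_def by blast
  define V where "V = (\<lambda>n. complex_of_real (japan (Lam n) powr \<epsilon>) * u n)"
  define J where "J (n :: 'd \<Rightarrow> nat) = japan (Lam n)" for n
  define S where "S = {n :: 'd \<Rightarrow> nat. J n \<le> 1 / \<bar>s\<bar>}"
  define ul where "ul n = (if n \<in> S then u n else 0)" for n
  define uh where "uh n = (if n \<in> S then 0 else u n)" for n
  have J1: "1 \<le> J n" for n unfolding J_def by (rule japan_ge_1)
  have sp: "0 < \<bar>s\<bar>" using s by simp
  have Vn: "cmod (V n) = J n powr \<epsilon> * cmod (u n)" for n
    unfolding V_def J_def by (simp add: norm_mult)
  have finS: "finite S" unfolding S_def J_def by (rule finite_low_set)
  have ul2: "ul \<in> l2" using l2_dom[OF u, of 1 ul] by (auto simp: ul_def)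
  have uh2: "uh \<in> l2" using l2_dom[OF u, of 1 uh] by (auto simp: uh_def)
  have uh_bound: "l2norm uh \<le> \<bar>s\<bar> powr \<epsilon> * l2norm V"
  proof -
    have "cmod (uh n) \<le> \<bar>s\<bar> powr \<epsilon> * cmod (V n)" for n
    proof (cases "n \<in> S")
      case False
      then have "1 / \<bar>s\<bar> < J n" unfolding S_def by simp
      then have "1 \<le> \<bar>s\<bar> * J n" using sp by (simp add: field_simps)
      then have "1 \<le> (\<bar>s\<bar> * J n) powr \<epsilon>" using e by (intro ge_one_powr_ge_zero) auto
      then have "cmod (u n) \<le> (\<bar>s\<bar> * J n) powr \<epsilon> * cmod (u n)"
        by (simp add: mult_le_cancel_right1)
      then show ?thesis using False by (simp add: uh_def Vn powr_mult)
    qed (simp add: uh_def)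
    then show ?thesis using l2_dom[of V "\<bar>s\<bar> powr \<epsilon>" uh] v unfolding V_def by auto
  qed
  have high: "l2norm (\<lambda>n. W s uh n - uh n) \<le> 2 * \<bar>s\<bar> powr \<epsilon> * l2norm V"
  proof -
    have "l2norm (\<lambda>n. W s uh n - uh n) \<le> l2norm (W s uh) + l2norm uh"
      by (rule l2norm_triangle_diff[OF W_l2[OF UG uh2] uh2])
    also have "\<dots> = 2 * l2norm uh" using W_iso[OF UG uh2] by simp
    finally show ?thesis using uh_bound by simp
  qed
  define Lul where "Lul = (\<lambda>m. complex_of_real (Lam m) * ul m)"
  have Lul_pw: "cmod (Lul n) \<le> \<bar>s\<bar> powr (\<epsilon> - 1) * cmod (V n)" for n
  proof (cases "n \<in> S")
    case True
    then have JS: "J n \<le> 1 / \<bar>s\<bar>" unfolding S_def by simp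
    have "cmod (Lul n) = Lam n * cmod (u n)"
      using True Lam_nonneg[of n] by (simp add: Lul_def ul_def norm_mult)
    also have "\<dots> \<le> J n * cmod (u n)"
      using japan_ge_abs[of "Lam n"] unfolding J_def by (intro mult_right_mono) auto
    also have "J n * cmod (u n) = J n powr (1 - \<epsilon>) * (J n powr \<epsilon> * cmod (u n))"
      using J1[of n] by (simp add: powr_add[symmetric] mult.assoc[symmetric])
    also have "\<dots> \<le> \<bar>s\<bar> powr (\<epsilon> - 1) * (J n powr \<epsilon> * cmod (u n))"
    proof (rule mult_right_mono)
      have "J n powr (1 - \<epsilon>) \<le> (1 / \<bar>s\<bar>) powr (1 - \<epsilon>)"
        using JS J1[of n] e by (intro powr_mono2) auto
      also have "(1 / \<bar>s\<bar>) powr (1 - \<epsilon>) = \<bar>s\<bar> powr (\<epsilon> - 1)"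
        using sp by (simp add: powr_divide powr_diff)
      finally show "J n powr (1 - \<epsilon>) \<le> \<bar>s\<bar> powr (\<epsilon> - 1)" .
    qed simp
    finally show ?thesis by (simp add: Vn)
  qed (simp add: Lul_def ul_def)
  have Lul2: "Lul \<in> l2 \<and> l2norm Lul \<le> \<bar>s\<bar> powr (\<epsilon> - 1) * l2norm V"
    by (rule l2_dom) (use v Lul_pw in \<open>auto simp: V_def\<close>)
  have A0ul: "A0 r ul \<in> l2 \<and> l2norm (A0 r ul) \<le> 2 * real CARD('d) * l2norm Lul"
    using A0_bound[of ul r] Lul2 unfolding Lul_def by auto
  have gr: "(ul, A0 r ul) \<in> A_graph r"
  proof (rule graph_finite_support[OF ul2])
    show "A0 r ul \<in> l2" using A0ul by blast
    show "finite {n. ul n \<noteq> 0}" by (rule finite_subset[OF _ finS]) (auto simp: ul_def)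
  qed
  have low: "l2norm (\<lambda>n. W s ul n - ul n) \<le> 2 * real CARD('d) * \<bar>s\<bar> powr \<epsilon> * l2norm V"
  proof -
    have "l2norm (\<lambda>n. W s ul n - ul n) \<le> \<bar>s\<bar> * l2norm (A0 r ul)"
      by (rule psi_bound[OF GB ul2 _ gr]) (use A0ul in auto)
    also have "\<dots> \<le> \<bar>s\<bar> * (2 * real CARD('d) * (\<bar>s\<bar> powr (\<epsilon> - 1) * l2norm V))"
    proof -
      have "l2norm (A0 r ul) \<le> 2 * real CARD('d) * (\<bar>s\<bar> powr (\<epsilon> - 1) * l2norm V)"
      proof -
        have "2 * real CARD('d) * l2norm Lul \<le> 2 * real CARD('d) * (\<bar>s\<bar> powr (\<epsilon> - 1) * l2norm V)"
          using Lul2 by (intro mult_left_mono) auto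
        then show ?thesis using A0ul by linarith
      qed
      then show ?thesis by (simp add: mult_left_mono)
    qed
    also have "\<dots> = 2 * real CARD('d) * (\<bar>s\<bar> * \<bar>s\<bar> powr (\<epsilon> - 1)) * l2norm V"
      by (simp add: algebra_simps)
    also have "\<bar>s\<bar> * \<bar>s\<bar> powr (\<epsilon> - 1) = \<bar>s\<bar> powr \<epsilon>"
      using sp by (simp add: powr_diff)
    finally show ?thesis .
  qed
  have split: "u = (\<lambda>n. ul n + uh n)" by (auto simp: ul_def uh_def)
  have "(\<lambda>n. W s u n - u n) = (\<lambda>n. (W s ul n - ul n) + (W s uh n - uh n))"
    by (subst split, subst W_plus[OF UG ul2 uh2]) (auto simp: ul_def uh_def)
  then have "l2norm (\<lambda>n. W s u n - u n) \<le> l2norm (\<lambda>n. W s ul n - ul n) + l2norm (\<lambda>n. W s uh n - uh n)"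
    using l2norm_triangle[OF l2_diff[OF W_l2[OF UG ul2] ul2] l2_diff[OF W_l2[OF UG uh2] uh2]] by simp
  also have "\<dots> \<le> 2 * real CARD('d) * \<bar>s\<bar> powr \<epsilon> * l2norm V + 2 * \<bar>s\<bar> powr \<epsilon> * l2norm V"
    using low high by simp
  finally show ?thesis unfolding V_def by (simp add: algebra_simps)
qed

lemma l2_re_inner_sym: "a \<in> l2 \<Longrightarrow> b \<in> l2 \<Longrightarrow> Re (l2inner a b) = Re (l2inner b a)"
  using l2_polar[of a b] l2_polar[of b a] l2norm_minus_commute[of a b] by (simp add: add.commute)

lemma W_re_inner:
  assumes UG: "unitary_group W" and a: "a \<in> l2" and b: "b \<in> l2"
  shows "Re (l2inner (W s a) (W s b)) = Re (l2inner a b)"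
proof -
  have "Re (l2inner (W s a) (W s b)) =
     ((l2norm (\<lambda>n. W s a n + W s b n))\<^sup>2 - (l2norm (\<lambda>n. W s a n - W s b n))\<^sup>2) / 4"
    by (rule l2_polar[OF W_l2[OF UG a] W_l2[OF UG b]])
  also have "\<dots> = ((l2norm (\<lambda>n. a n + b n))\<^sup>2 - (l2norm (\<lambda>n. a n - b n))\<^sup>2) / 4"
    using W_plus[OF UG a b, of s] W_diff[OF UG a b, of s]
      W_iso[OF UG l2_add[OF a b], of s] W_iso[OF UG l2_diff[OF a b], of s] by simp
  also have "\<dots> = Re (l2inner a b)" by (rule l2_polar[OF a b, symmetric])
  finally show ?thesis .
qed

lemma comm_est:
  fixes T :: "(('d::finite \<Rightarrow> nat) \<Rightarrow> complex) \<Rightarrow> (('d \<Rightarrow> nat) \<Rightarrow> complex)"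
  assumes GB: "generated_by W r" and e: "0 < \<epsilon>" "\<epsilon> < 1"
    and BT: "bounded_op T" and ST: "symmetric_op T"
    and M: "0 \<le> M" "\<And>f. f \<in> l2 \<Longrightarrow> l2norm (\<lambda>n. of_real (japan (Lam n) powr \<epsilon>) * T f n) \<le> M * l2norm f"
    and VT: "\<And>f. f \<in> l2 \<Longrightarrow> (\<lambda>n. of_real (japan (Lam n) powr \<epsilon>) * T f n) \<in> l2"
    and s: "s \<noteq> 0" and f: "f \<in> l2"
  shows "l2norm (\<lambda>n. W s (T (W (- s) f)) n - T f n)
     \<le> 2 * ((2 + 2 * real CARD('d)) * M * \<bar>s\<bar> powr \<epsilon>) * l2norm f"
proof -
  define K where "K = (2 + 2 * real CARD('d))"
  define C where "C = K * M * \<bar>s\<bar> powr \<epsilon>"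
  have C0: "0 \<le> C" unfolding C_def K_def using M by simp
  have UG: "unitary_group W" using GB unfolding generated_by_def by blast
  have Tl2: "\<And>g. g \<in> l2 \<Longrightarrow> T g \<in> l2" using BT unfolding bounded_op_def by blast
  have Tlin: "\<And>g h a b. g \<in> l2 \<Longrightarrow> h \<in> l2 \<Longrightarrow> T (\<lambda>n. a * g n + b * h n) = (\<lambda>n. a * T g n + b * T h n)"
    using BT unfolding bounded_op_def by blast
  have Tsym: "\<And>g h. g \<in> l2 \<Longrightarrow> h \<in> l2 \<Longrightarrow> l2inner (T g) h = l2inner g (T h)"
    using ST unfolding symmetric_op_def by blast
  have est: "l2norm (\<lambda>n. W t (T g) n - T g n) \<le> C * l2norm g" if g: "g \<in> l2" and t: "\<bar>t\<bar> = \<bar>s\<bar>" for g t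
  proof -
    have "l2norm (\<lambda>n. W t (T g) n - T g n) \<le> K * \<bar>t\<bar> powr \<epsilon> *
           l2norm (\<lambda>n. complex_of_real (japan (Lam n) powr \<epsilon>) * T g n)"
      unfolding K_def by (rule main_est[OF GB Tl2[OF g] VT[OF g] e]) (use s t in auto)
    also have "\<dots> \<le> K * \<bar>t\<bar> powr \<epsilon> * (M * l2norm g)"
      using M(2)[OF g] by (intro mult_left_mono) (auto simp: K_def)
    finally show ?thesis unfolding C_def using t by (simp add: mult_ac)
  qed
  define X where "X = W (- s)"
  have Xf: "X f \<in> l2" unfolding X_def by (rule W_l2[OF UG f])
  have Tf: "T f \<in> l2" by (rule Tl2[OF f])
  have XTf: "X (T f) \<in> l2" unfolding X_def by (rule W_l2[OF UG Tf])
  have TXf: "T (X f) \<in> l2" by (rule Tl2[OF Xf])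
  define y where "y = (\<lambda>n. X f n - f n)"
  have y: "y \<in> l2" unfolding y_def by (rule l2_diff[OF Xf f])
  define w where "w = T y"
  have w: "w \<in> l2" unfolding w_def by (rule Tl2[OF y])
  have Tw: "T w \<in> l2" by (rule Tl2[OF w])
  have WTw: "W s (T w) \<in> l2" by (rule W_l2[OF UG Tw])
  have Ty: "T y = (\<lambda>n. T (X f) n - T f n)"
    unfolding y_def using Tlin[OF Xf f, of 1 "-1"] by simp
  have D: "(\<lambda>n. W s (T (W (- s) f)) n - T f n) = W s (\<lambda>n. T (X f) n - X (T f) n)"
    using W_diff[OF UG TXf XTf, of s] W_inv[OF UG Tf, of s] unfolding X_def by simp
  have ND: "l2norm (\<lambda>n. W s (T (W (- s) f)) n - T f n) = l2norm (\<lambda>n. T (X f) n - X (T f) n)"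
    using D W_iso[OF UG l2_diff[OF TXf XTf], of s] by simp
  have split: "(\<lambda>n. T (X f) n - X (T f) n) = (\<lambda>n. w n - (X (T f) n - T f n))"
    unfolding w_def Ty by simp
  have n2: "l2norm (\<lambda>n. X (T f) n - T f n) \<le> C * l2norm f"
  proof -
    have "l2norm (\<lambda>n. W (-s) (T f) n - T f n) \<le> K * \<bar>-s\<bar> powr \<epsilon> *
           l2norm (\<lambda>n. complex_of_real (japan (Lam n) powr \<epsilon>) * T f n)"
      unfolding K_def by (rule main_est[OF GB Tf VT[OF f] e]) (use s in auto)
    also have "\<dots> \<le> K * \<bar>s\<bar> powr \<epsilon> * (M * l2norm f)"
      using M(2)[OF f] by (simp only: abs_minus_cancel) (intro mult_left_mono, auto simp: K_def)
    finally show ?thesis unfolding C_def X_def by (simp add: mult_ac)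
  qed
  have n1: "l2norm w \<le> C * l2norm f"
  proof -
    have "(l2norm w)\<^sup>2 = Re (l2inner w w)" by (rule l2_re_inner_self[OF w, symmetric])
    also have "\<dots> = Re (l2inner (T w) y)" unfolding w_def using Tsym[OF w y] w_def by simp
    also have "\<dots> = Re (l2inner (T w) (X f)) - Re (l2inner (T w) f)"
      unfolding y_def by (rule l2_re_inner_diff[OF Tw Xf f])
    also have "Re (l2inner (T w) (X f)) = Re (l2inner (W s (T w)) f)"
      using W_re_inner[OF UG Tw Xf, of s] W_inv[OF UG f, of s] unfolding X_def by simp
    also have "Re (l2inner (W s (T w)) f) - Re (l2inner (T w) f)
        = Re (l2inner f (\<lambda>n. W s (T w) n - T w n))"
      using l2_re_inner_diff[OF f WTw Tw] l2_re_inner_sym[OF f WTw] l2_re_inner_sym[OF f Tw] by simp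
    also have "\<dots> \<le> l2norm f * l2norm (\<lambda>n. W s (T w) n - T w n)"
      by (rule l2_re_inner_le[OF f l2_diff[OF WTw Tw]])
    also have "\<dots> \<le> l2norm f * (C * l2norm w)"
      using est[OF w, of s] by (intro mult_left_mono) (auto simp: l2norm_nonneg)
    finally have sq: "(l2norm w)\<^sup>2 \<le> (C * l2norm f) * l2norm w" by (simp add: algebra_simps)
    show ?thesis
    proof (cases "l2norm w = 0")
      case True then show ?thesis using C0 l2norm_nonneg[of f] by simp
    next
      case False
      then have "0 < l2norm w" using l2norm_nonneg[of w] by simp
      then show ?thesis using sq by (simp add: power2_eq_square)
    qed
  qed
  have "l2norm (\<lambda>n. T (X f) n - X (T f) n) \<le> l2norm w + l2norm (\<lambda>n. X (T f) n - T f n)"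
    unfolding split by (rule l2norm_triangle_diff[OF w l2_diff[OF XTf Tf]])
  then show ?thesis using ND n1 n2 unfolding C_def K_def by simp
qed

theorem corollary5p3:
  fixes \<epsilon> :: real and T :: "(('d::finite \<Rightarrow> nat) \<Rightarrow> complex) \<Rightarrow> (('d \<Rightarrow> nat) \<Rightarrow> complex)"
    and r :: "'d \<Rightarrow> real"
    and W :: "real \<Rightarrow> (('d \<Rightarrow> nat) \<Rightarrow> complex) \<Rightarrow> (('d \<Rightarrow> nat) \<Rightarrow> complex)"
  assumes "0 < \<epsilon>" and "\<epsilon> < 1"
    and "\<forall>j. r j \<noteq> 0"
    and "generated_by W r"
    and "bounded_op T" and "symmetric_op T"
    and "bounded_op (\<lambda>f n. of_real (japan (Lam n) powr \<epsilon>) * T f n)"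
  shows "C01 W T"
proof -
  obtain M0 where M0: "\<forall>f\<in>l2. l2norm (\<lambda>n. of_real (japan (Lam n) powr \<epsilon>) * T f n) \<le> M0 * l2norm f"
    using assms(7) unfolding bounded_op_def by blast
  define M where "M = max M0 0"
  have M: "0 \<le> M" "\<And>f. f \<in> l2 \<Longrightarrow> l2norm (\<lambda>n. of_real (japan (Lam n) powr \<epsilon>) * T f n) \<le> M * l2norm f"
  proof -
    show "0 \<le> M" unfolding M_def by simp
    fix f :: "('d \<Rightarrow> nat) \<Rightarrow> complex" assume f: "f \<in> l2"
    have "M0 * l2norm f \<le> M * l2norm f" unfolding M_def
      by (intro mult_right_mono) (auto simp: l2norm_nonneg)
    then show "l2norm (\<lambda>n. of_real (japan (Lam n) powr \<epsilon>) * T f n) \<le> M * l2norm f"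
      using M0 f by force
  qed
  have VT: "\<And>f. f \<in> l2 \<Longrightarrow> (\<lambda>n. of_real (japan (Lam n) powr \<epsilon>) * T f n) \<in> l2"
    using assms(7) unfolding bounded_op_def by blast
  define B where "B = 2 * ((2 + 2 * real CARD('d)) * M)"
  have B0: "0 \<le> B" unfolding B_def using M by simp
  have opn: "opnorm (\<lambda>f n. W s (T (W (- s) f)) n - T f n) \<le> B * s powr \<epsilon>" if s: "0 < s" for s
    unfolding opnorm_def
  proof (rule cSup_least, goal_cases)
    case 1
    have "(\<lambda>n::'d \<Rightarrow> nat. 0::complex) \<in> l2 \<and> l2norm (\<lambda>n::'d \<Rightarrow> nat. 0::complex) \<le> 1"
      by (intro conjI l2_zero) (simp add: l2norm_zero)
    then show ?case by blast
  next
    case (2 x)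
    then obtain f where f: "f \<in> l2" "l2norm f \<le> 1" and x: "x = l2norm (\<lambda>n. W s (T (W (- s) f)) n - T f n)"
      by blast
    have "l2norm (\<lambda>n. W s (T (W (- s) f)) n - T f n) \<le> 2 * ((2 + 2 * real CARD('d)) * M * \<bar>s\<bar> powr \<epsilon>) * l2norm f"
      by (rule comm_est[OF assms(4) assms(1,2) assms(5,6) M VT]) (use s f in auto)
    also have "\<dots> \<le> 2 * ((2 + 2 * real CARD('d)) * M * \<bar>s\<bar> powr \<epsilon>) * 1"
      using f M by (intro mult_left_mono) auto
    finally show "x \<le> B * s powr \<epsilon>" using x s unfolding B_def by (simp add: algebra_simps)
  qed
  have hi: "((\<lambda>x. B * x powr (\<epsilon> - 1)) has_integral B * (1 powr (\<epsilon> - 1 + 1) / (\<epsilon> - 1 + 1))) {0<..1}"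
  proof -
    have "((\<lambda>x. x powr (\<epsilon> - 1)) has_integral (1 powr (\<epsilon> - 1 + 1) / (\<epsilon> - 1 + 1))) {0..1}"
      by (rule has_integral_powr_from_0) (use assms(1) in auto)
    then have "((\<lambda>x. B * x powr (\<epsilon> - 1)) has_integral B * (1 powr (\<epsilon> - 1 + 1) / (\<epsilon> - 1 + 1))) {0..1}"
      by (rule has_integral_mult_right)
    moreover have n1: "negligible {x \<in> {0..1} - {0<..1}. B * x powr (\<epsilon> - 1) \<noteq> 0}"
      by (rule negligible_subset[of "{0}"]) auto
    moreover have "{x \<in> {0<..1} - {0..1::real}. B * x powr (\<epsilon> - 1) \<noteq> 0} = {}"
      by auto
    then have n2: "negligible {x \<in> {0<..1} - {0..1::real}. B * x powr (\<epsilon> - 1) \<noteq> 0}"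
      by (simp only: negligible_empty)
    ultimately show ?thesis
      using has_integral_spike_set_eq[OF n1 n2] by blast
  qed
  have "(\<integral>\<^sup>+ s\<in>{0<..1}. ennreal (opnorm (\<lambda>f n. W s (T (W (- s) f)) n - T f n) / s) \<partial>lborel)
      \<le> (\<integral>\<^sup>+ x. ennreal (indicator {0<..1} x * (B * x powr (\<epsilon> - 1))) \<partial>lborel)"
  proof (rule nn_integral_mono)
    fix x :: real
    show "ennreal (opnorm (\<lambda>f n. W x (T (W (- x) f)) n - T f n) / x) * indicator {0<..1} x
        \<le> ennreal (indicator {0<..1} x * (B * x powr (\<epsilon> - 1)))"
    proof (cases "x \<in> {0<..1}")
      case True
      then have x: "0 < x" by simp
      have "opnorm (\<lambda>f n. W x (T (W (- x) f)) n - T f n) / x \<le> B * x powr \<epsilon> / x"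
        using opn[OF x] x by (simp add: divide_right_mono)
      also have "B * x powr \<epsilon> / x = B * x powr (\<epsilon> - 1)"
        using x by (simp add: powr_diff)
      finally show ?thesis using True by (simp add: ennreal_leI)
    qed simp
  qed
  also have "\<dots> = ennreal (B * (1 powr (\<epsilon> - 1 + 1) / (\<epsilon> - 1 + 1)))"
    by (rule nn_integral_has_integral_lebesgue[OF _ hi]) (use B0 in auto)
  finally have fin: "(\<integral>\<^sup>+ s\<in>{0<..1}. ennreal (opnorm (\<lambda>f n. W s (T (W (- s) f)) n - T f n) / s) \<partial>lborel)
      \<le> ennreal (B * (1 powr (\<epsilon> - 1 + 1) / (\<epsilon> - 1 + 1)))" .
  show ?thesis unfolding C01_def infinity_ennreal_def by (rule order.strict_trans1[OF fin ennreal_less_top])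
qed

end
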